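(* There is a constant $c$ depending only on $d$ and $\kappa$ such that for all $0\le\theta\le\pi$ and all $x=(x_1,\dots,x_{d+1}),y\in S^d$, $$\big|V_\kappa[\chi_{B(x,\theta)}](y)\big|\le c\prod_{j=1}^{d+1}\frac{\theta^{2\kappa_j}}{(|x_j|+\theta)^{2\kappa_j}}\ \chi_{c(\bar x,\theta)}(\bar y).$$
   Context: $S^d$ is the unit sphere in $\mathbb R^{d+1}$, $\kappa=(\kappa_1,\dots,\kappa_{d+1})$ with $\kappa_i\ge0$, and $V_\kappa f(x)=c_\kappa\int_{[-1,1]^{d+1}}f(x_1t_1,\dots,x_{d+1}t_{d+1})\prod_{i=1}^{d+1}(1+t_i)(1-t_i^2)^{\kappa_i-1}dt$ with $V_\kappa1=1$ (factors with $\kappa_i=0$ interpreted via the limit $\frac12[g(1)+g(-1)]$). $B(x,\theta)=\{y\in\mathbb R^{d+1}:\|y\|\le1,\langle x,y\rangle\ge\cos\theta\}$; $c(z,\theta)=\{y\in S^d:\langle z,y\rangle\ge\cos\theta\}$ is the spherical cap; $\bar z=(|z_1|,\dots,|z_{d+1}|)$; $\chi_E$ is the indicator of $E$. *)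

theory Defs
  imports "HOL-Probability.Probability"
begin

text \<open>One-dimensional weight measure on [-1,1] for parameter k:
  for k > 0 the probability measure c_k (1+t)(1-t^2)^(k-1) dt on (-1,1);
  for k = 0 the limit functional g \<mapsto> (1/2)(g(1)+g(-1)) applied to g(t) = h(t)(1+t),
  i.e. the measure with density (1+t)/2 on {-1,1}.\<close>
definition wnorm :: "real \<Rightarrow> real" where
  "wnorm k = (LINT s:{-1<..<1}|lborel. (1 + s) * (1 - s\<^sup>2) powr (k - 1))"

definition wmeas :: "real \<Rightarrow> real measure" where
  "wmeas k = (if k = 0
     then density (count_space UNIV) (\<lambda>t. ennreal ((1 + t) / 2 * indicator {-1, 1} t))
     else density lborel (\<lambda>t. ennreal (indicator {-1<..<1} t * (1 + t) * (1 - t\<^sup>2) powr (k - 1) / wnorm k)))"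

definition V_kappa :: "real ^ 'n::finite \<Rightarrow> (real ^ 'n \<Rightarrow> real) \<Rightarrow> real ^ 'n \<Rightarrow> real" where
  "V_kappa \<kappa> f x = (\<integral>t. f (\<chi> i. x $ i * t i) \<partial>(PiM UNIV (\<lambda>i. wmeas (\<kappa> $ i))))"

definition Bset :: "real ^ 'n::finite \<Rightarrow> real \<Rightarrow> (real ^ 'n) set" where
  "Bset x \<theta> = {y. norm y \<le> 1 \<and> inner x y \<ge> cos \<theta>}"

definition cap :: "real ^ 'n::finite \<Rightarrow> real \<Rightarrow> (real ^ 'n) set" where
  "cap z \<theta> = {y. norm y = 1 \<and> inner z y \<ge> cos \<theta>}"

definition absvec :: "real ^ 'n::finite \<Rightarrow> real ^ 'n" where
  "absvec z = (\<chi> i. \<bar>z $ i\<bar>)"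

text \<open>The factor theta^(2k) / (a + theta)^(2k), with the conventions
  theta^0 = 1 and, for a = 0, the value 1 (= theta^(2k)/theta^(2k), also its limit at theta=0).\<close>
definition ratio_factor :: "real \<Rightarrow> real \<Rightarrow> real \<Rightarrow> real" where
  "ratio_factor \<theta> a k = (if k = 0 \<or> a = 0 then 1 else \<theta> powr (2 * k) / (a + \<theta>) powr (2 * k))"

end

theory Submission
  imports Defs
begin

lemma space_wmeas[simp]: "space (wmeas k) = UNIV"
  by (simp add: wmeas_def)

lemma meas_wmeas: "f \<in> borel_measurable borel \<Longrightarrow> f \<in> borel_measurable (wmeas k)"
  unfolding wmeas_def by auto

lemma sets_wmeas: "A \<in> sets borel \<Longrightarrow> A \<in> sets (wmeas k)"
  unfolding wmeas_def by auto

lemma powr_int_0: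
  fixes k \<delta> :: real
  assumes "k > 0" "\<delta> \<ge> 0"
  shows "(\<integral>\<^sup>+u. ennreal (indicator {0<..\<delta>} u * u powr (k - 1)) \<partial>lborel) = ennreal (\<delta> powr k / k)"
proof -
  have "((\<lambda>x. x powr (k-1)) has_integral (\<delta> powr (k - 1 + 1) / (k - 1 + 1))) {0..\<delta>}"
    by (rule has_integral_powr_from_0) (use assms in auto)
  hence "((\<lambda>x. x powr (k-1)) has_integral (\<delta> powr k / k)) {0..\<delta>}" by simp
  hence "((\<lambda>x. x powr (k-1)) has_integral (\<delta> powr k / k)) {0<..\<delta>}"
    by (subst (asm) has_integral_spike_set_eq[where T="{0<..\<delta>}"])
       (auto intro: negligible_subset[OF negligible_empty])
  hence "((\<lambda>x. if x \<in> {0<..\<delta>} then x powr (k-1) else 0) has_integral (\<delta> powr k / k)) UNIV"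
    by (subst has_integral_restrict_UNIV)
  hence "((\<lambda>x. indicator {0<..\<delta>} x * x powr (k-1)) has_integral (\<delta> powr k / k)) UNIV"
    by (rule has_integral_eq[rotated]) (auto simp: indicator_def)
  thus ?thesis
    by (intro nn_integral_has_integral_lborel) auto
qed

lemma dens_bound:
  fixes k s :: real
  assumes "-1 < s" "s < 1"
  shows "(1 + s) * (1 - s\<^sup>2) powr (k - 1) \<le> 2 * 2 powr \<bar>k - 1\<bar> * (1 - \<bar>s\<bar>) powr (k - 1)"
proof -
  have e: "1 - s\<^sup>2 = (1 - \<bar>s\<bar>) * (1 + \<bar>s\<bar>)" by (simp add: power2_eq_square algebra_simps)
  have p: "0 < 1 - \<bar>s\<bar>" using assms by auto
  have q: "(1 + \<bar>s\<bar>) powr (k - 1) \<le> 2 powr \<bar>k - 1\<bar>"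
  proof (cases "k - 1 \<ge> 0")
    case True
    have "(1 + \<bar>s\<bar>) powr (k - 1) \<le> 2 powr (k - 1)"
      by (rule powr_mono2) (use True assms in auto)
    with True show ?thesis by simp
  next
    case False
    have "(1 + \<bar>s\<bar>) powr (k - 1) \<le> 1"
      using powr_mono[of "k-1" 0 "1+\<bar>s\<bar>"] False by (simp split: if_splits; linarith)
    also have "1 \<le> 2 powr \<bar>k - 1\<bar>" by (rule ge_one_powr_ge_zero) auto
    finally show ?thesis .
  qed
  have "(1 + s) * (1 - s\<^sup>2) powr (k - 1) = (1 + s) * ((1 + \<bar>s\<bar>) powr (k - 1)) * (1 - \<bar>s\<bar>) powr (k - 1)"
    unfolding e using p by (simp add: powr_mult)
  also have "\<dots> \<le> 2 * 2 powr \<bar>k - 1\<bar> * (1 - \<bar>s\<bar>) powr (k - 1)"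
    by (intro mult_right_mono mult_mono q) (use assms in auto)
  finally show ?thesis .
qed

lemma tail:
  fixes k \<delta> :: real and A :: "real set"
  assumes k: "k > 0" and d: "0 \<le> \<delta>" and A: "A \<in> sets borel"
    and sub: "\<And>s. s \<in> A \<Longrightarrow> -1 < s \<Longrightarrow> s < 1 \<Longrightarrow> 1 - \<bar>s\<bar> \<le> \<delta>"
  shows "emeasure (wmeas k) A \<le> ennreal (2 * 2 powr \<bar>k - 1\<bar> / \<bar>wnorm k\<bar> * (2 * (\<delta> powr k / k)))"
proof -
  define Q where "Q = 2 * 2 powr \<bar>k - 1\<bar> / \<bar>wnorm k\<bar>"
  define H where "H = (\<lambda>u. indicator {0<..\<delta>} u * u powr (k - 1) :: real)"
  have Q0: "Q \<ge> 0" unfolding Q_def by simp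
  have H0: "H u \<ge> 0" for u unfolding H_def by (simp add: indicator_def)
  have [measurable]: "H \<in> borel_measurable borel" unfolding H_def by measurable
  have "emeasure (wmeas k) A = (\<integral>\<^sup>+ t. ennreal (indicator {-1<..<1} t * (1 + t) * (1 - t\<^sup>2) powr (k - 1) / wnorm k) * indicator A t \<partial>lborel)"
    using k A by (simp add: wmeas_def emeasure_density)
  also have "\<dots> \<le> (\<integral>\<^sup>+ t. ennreal (Q * (H (1 - t) + H (1 + t))) \<partial>lborel)"
  proof (rule nn_integral_mono)
    fix t :: real
    show "ennreal (indicator {-1<..<1} t * (1 + t) * (1 - t\<^sup>2) powr (k - 1) / wnorm k) * indicator A t
      \<le> ennreal (Q * (H (1 - t) + H (1 + t)))"
    proof (cases "t \<in> A \<and> -1 < t \<and> t < 1")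
      case True
      hence t: "t \<in> A" "-1 < t" "t < 1" by auto
      have "1 - \<bar>t\<bar> \<le> \<delta>" using sub t by auto
      hence Hle: "(1 - \<bar>t\<bar>) powr (k - 1) \<le> H (1 - t) + H (1 + t)"
        using t H0[of "1-t"] H0[of "1+t"] by (cases "t \<ge> 0") (auto simp: H_def indicator_def)
      have "(1 + t) * (1 - t\<^sup>2) powr (k - 1) / wnorm k \<le> Q * (1 - \<bar>t\<bar>) powr (k - 1)"
      proof (cases "wnorm k > 0")
        case True
        have "(1 + t) * (1 - t\<^sup>2) powr (k - 1) / wnorm k \<le> 2 * 2 powr \<bar>k - 1\<bar> * (1 - \<bar>t\<bar>) powr (k - 1) / wnorm k"
          by (rule divide_right_mono[OF dens_bound]) (use t True in auto)
        thus ?thesis using True by (simp add: Q_def)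
      next
        case False
        have "(1 + t) * (1 - t\<^sup>2) powr (k - 1) \<ge> 0" using t by auto
        hence "(1 + t) * (1 - t\<^sup>2) powr (k - 1) / wnorm k \<le> 0"
          using False by (simp add: divide_nonneg_nonpos)
        also have "0 \<le> Q * (1 - \<bar>t\<bar>) powr (k - 1)" using Q0 by simp
        finally show ?thesis .
      qed
      also have "\<dots> \<le> Q * (H (1 - t) + H (1 + t))" by (rule mult_left_mono[OF Hle Q0])
      finally show ?thesis using t by (simp add: indicator_def ennreal_leI)
    next
      case False
      thus ?thesis by (auto simp: indicator_def)
    qed
  qed
  also have "\<dots> = ennreal Q * ((\<integral>\<^sup>+ t. ennreal (H (1 - t)) \<partial>lborel) + (\<integral>\<^sup>+ t. ennreal (H (1 + t)) \<partial>lborel))"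
    using Q0 H0 by (simp add: ennreal_mult ennreal_plus nn_integral_cmult nn_integral_add)
  also have "(\<integral>\<^sup>+ t. ennreal (H (1 - t)) \<partial>lborel) = (\<integral>\<^sup>+ t. ennreal (H t) \<partial>lborel)"
    using nn_integral_real_affine[of "\<lambda>t. ennreal (H t)" "-1" 1] by simp
  also have "(\<integral>\<^sup>+ t. ennreal (H (1 + t)) \<partial>lborel) = (\<integral>\<^sup>+ t. ennreal (H t) \<partial>lborel)"
    using nn_integral_real_affine[of "\<lambda>t. ennreal (H t)" 1 1] by simp
  also have "(\<integral>\<^sup>+ t. ennreal (H t) \<partial>lborel) = ennreal (\<delta> powr k / k)"
    unfolding H_def by (rule powr_int_0[OF k d])
  finally have "emeasure (wmeas k) A \<le> ennreal Q * (ennreal (\<delta> powr k / k) + ennreal (\<delta> powr k / k))" .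
  also have "\<dots> = ennreal (Q * (2 * (\<delta> powr k / k)))"
    using Q0 k d by (simp add: ennreal_mult''[symmetric] ennreal_plus[symmetric] del: ennreal_plus)
  finally show ?thesis unfolding Q_def .
qed

lemma cos_bound: "1 - cos (t::real) \<le> t\<^sup>2 / 2"
proof -
  have "cos t = cos (2 * (t/2))" by simp
  also have "\<dots> = 1 - 2 * (sin (t/2))\<^sup>2" by (rule cos_double_sin)
  finally have "1 - cos t = 2 * (sin (t/2))\<^sup>2" by simp
  also have "\<dots> \<le> 2 * (t/2)\<^sup>2"
    using abs_sin_x_le_abs_x[of "t/2"]
    by (metis abs_ge_zero mult_left_mono power2_abs power_mono zero_le_numeral)
  finally show ?thesis by (simp add: power2_eq_square)
qed

definition M0 :: "real \<Rightarrow> real" where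
  "M0 k = (if k = 0 then 1 else 2 * 2 powr \<bar>k - 1\<bar> / \<bar>wnorm k\<bar> * (2 * (1 / k)))"

lemma M0_nonneg: "k \<ge> 0 \<Longrightarrow> M0 k \<ge> 0"
  by (simp add: M0_def)

lemma emeas_le:
  fixes k :: real and A :: "real set"
  assumes k: "k \<ge> 0" and A: "A \<in> sets borel"
  shows "emeasure (wmeas k) A \<le> ennreal (M0 k)"
proof (cases "k = 0")
  case True
  have "emeasure (wmeas k) A = (\<integral>\<^sup>+ (x::real). ennreal ((1 + x) / 2 * indicator {-1, 1} x) * indicator A x \<partial>count_space UNIV)"
    using True by (simp add: wmeas_def emeasure_density)
  also have "\<dots> \<le> (\<integral>\<^sup>+ (x::real). ennreal (indicator {1} x) \<partial>count_space UNIV)"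
    by (rule nn_integral_mono) (auto simp: indicator_def)
  also have "\<dots> = 1" by (simp add: ennreal_indicator)
  finally show ?thesis using True by (simp add: M0_def)
next
  case False
  hence "k > 0" using k by simp
  from tail[OF this _ A, of 1] show ?thesis using False by (simp add: M0_def)
qed

lemma finite_wmeas: "k \<ge> 0 \<Longrightarrow> finite_measure (wmeas k)"
  apply (rule finite_measureI)
  using emeas_le[of k UNIV] by (auto simp: top_unique)

lemma null_outside: 
  fixes k :: real
  assumes "k \<ge> 0"
  shows "emeasure (wmeas k) {s. 1 < \<bar>s\<bar>} = 0"
proof (cases "k = 0")
  case True
  have "emeasure (wmeas k) {s. 1 < \<bar>s\<bar>} = (\<integral>\<^sup>+ (x::real). ennreal ((1 + x) / 2 * indicator {-1, 1} x) * indicator {s. 1 < \<bar>s\<bar>} x \<partial>count_space UNIV)"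
    using True by (simp add: wmeas_def emeasure_density)
  also have "\<dots> = (\<integral>\<^sup>+ (x::real). 0 \<partial>count_space UNIV)"
    by (rule nn_integral_cong) (auto simp: indicator_def split: if_splits)
  finally show ?thesis by simp
next
  case False
  have "emeasure (wmeas k) {s. 1 < \<bar>s\<bar>} = (\<integral>\<^sup>+ t. ennreal (indicator {-1<..<1} t * (1 + t) * (1 - t\<^sup>2) powr (k - 1) / wnorm k) * indicator {s. 1 < \<bar>s\<bar>} t \<partial>lborel)"
    using False by (simp add: wmeas_def emeasure_density)
  also have "\<dots> = (\<integral>\<^sup>+ (x::real). 0 \<partial>lborel)"
    by (rule nn_integral_cong) (auto simp: indicator_def split: if_splits)
  finally show ?thesis by simp
qed

lemma sq_powr: "(0::real) \<le> t \<Longrightarrow> (t\<^sup>2) powr k = t powr (2 * k)"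
proof -
  assume t: "0 \<le> t"
  have "t\<^sup>2 = t powr 2" using t by (simp add: powr_numeral)
  thus ?thesis by (simp add: powr_powr)
qed

lemma ratio_ge:
  fixes a \<theta> k :: real
  assumes "k > 0" "0 < a" "a \<le> 2 * \<theta>"
  shows "1 \<le> 9 powr k * ratio_factor \<theta> a k"
proof -
  have th: "\<theta> > 0" using assms by auto
  have "(a + \<theta>) powr (2 * k) \<le> (3 * \<theta>) powr (2 * k)"
    by (rule powr_mono2) (use assms in auto)
  also have "\<dots> = 9 powr k * \<theta> powr (2 * k)"
    using th by (simp add: powr_mult sq_powr[of 3, symmetric])
  finally have "(a + \<theta>) powr (2 * k) \<le> 9 powr k * \<theta> powr (2 * k)" .
  moreover have "(a + \<theta>) powr (2 * k) > 0" using th assms by simp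
  ultimately show ?thesis using assms
    by (simp add: ratio_factor_def pos_le_divide_eq)
qed

lemma delta_le:
  fixes a b \<theta> k :: real
  assumes k: "k > 0" and a: "2 * \<theta> < a" and b: "a - b \<le> \<theta>" and th: "0 \<le> \<theta>"
  shows "((1 - cos \<theta>) / (a * b)) powr k \<le> 9 powr k * ratio_factor \<theta> a k"
proof -
  have a0: "a > 0" "b > 0" "b \<ge> a / 2" using a b th by auto
  have "(1 - cos \<theta>) / (a * b) \<le> (\<theta>\<^sup>2 / 2) / (a * (a / 2))"
    by (intro frac_le cos_bound mult_left_mono) (use a0 in auto)
  also have "\<dots> = \<theta>\<^sup>2 / a\<^sup>2" using a0 by (simp add: power2_eq_square)
  also have "\<dots> \<le> 9 * \<theta>\<^sup>2 / (a + \<theta>)\<^sup>2"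
  proof -
    have "(a + \<theta>)\<^sup>2 \<le> (3 * a)\<^sup>2" by (rule power_mono) (use a th in auto)
    hence "(a + \<theta>)\<^sup>2 \<le> 9 * a\<^sup>2" by (simp add: power_mult_distrib)
    hence "9 * \<theta>\<^sup>2 / (9 * a\<^sup>2) \<le> 9 * \<theta>\<^sup>2 / (a + \<theta>)\<^sup>2"
      by (intro divide_left_mono) (use a0 th in auto)
    thus ?thesis by simp
  qed
  finally have le: "(1 - cos \<theta>) / (a * b) \<le> 9 * \<theta>\<^sup>2 / (a + \<theta>)\<^sup>2" .
  have "0 \<le> (1 - cos \<theta>) / (a * b)" using a0 by simp
  hence "((1 - cos \<theta>) / (a * b)) powr k \<le> (9 * \<theta>\<^sup>2 / (a + \<theta>)\<^sup>2) powr k"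
    by (intro powr_mono2 le) (use k in auto)
  also have "\<dots> = 9 powr k * (\<theta> powr (2 * k) / (a + \<theta>) powr (2 * k))"
    using th a0 by (simp add: powr_mult powr_divide sq_powr)
  finally show ?thesis using k a0 by (simp add: ratio_factor_def)
qed

definition Kc :: "real \<Rightarrow> real" where "Kc k = M0 k * 9 powr k"

lemma coord_bound:
  fixes k a b \<theta> :: real
  assumes k: "k \<ge> 0" and th: "0 \<le> \<theta>" and a: "0 \<le> a" and b: "0 \<le> b" and ab: "a - b \<le> \<theta>"
  shows "measure (wmeas k) {s. \<bar>s\<bar> \<le> 1 \<and> a * b * (1 - \<bar>s\<bar>) \<le> 1 - cos \<theta>} \<le> Kc k * ratio_factor \<theta> a k"
proof -
  define G where "G = {s::real. \<bar>s\<bar> \<le> 1 \<and> a * b * (1 - \<bar>s\<bar>) \<le> 1 - cos \<theta>}"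
  have G: "G \<in> sets borel" unfolding G_def by measurable
  have M0: "M0 k \<ge> 0" using M0_nonneg k .
  have "emeasure (wmeas k) G \<le> ennreal (Kc k * ratio_factor \<theta> a k)"
  proof (cases "k = 0 \<or> a = 0")
    case True
    have "emeasure (wmeas k) G \<le> ennreal (M0 k)" by (rule emeas_le[OF k G])
    also have "ennreal (M0 k) \<le> ennreal (M0 k * 9 powr k)"
      using M0 k by (intro ennreal_leI) (simp add: ge_one_powr_ge_zero mult_le_cancel_left1)
    finally show ?thesis using True by (simp add: Kc_def ratio_factor_def)
  next
    case False
    hence k0: "k > 0" and a0: "a > 0" using k a by auto
    show ?thesis
    proof (cases "a \<le> 2 * \<theta>")
      case True
      have "emeasure (wmeas k) G \<le> ennreal (M0 k)" by (rule emeas_le[OF k G])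
      also have "ennreal (M0 k) \<le> ennreal (M0 k * (9 powr k * ratio_factor \<theta> a k))"
        using M0 ratio_ge[OF k0 a0 True] by (intro ennreal_leI) (simp add: mult_le_cancel_left1)
      finally show ?thesis by (simp add: Kc_def mult.assoc)
    next
      case False
      hence a2: "2 * \<theta> < a" by simp
      have b0: "b > 0" using a2 ab th by auto
      define \<delta> where "\<delta> = (1 - cos \<theta>) / (a * b)"
      have d0: "0 \<le> \<delta>" unfolding \<delta>_def using a0 b0 by simp
      have "emeasure (wmeas k) G \<le> ennreal (2 * 2 powr \<bar>k - 1\<bar> / \<bar>wnorm k\<bar> * (2 * (\<delta> powr k / k)))"
      proof (rule tail[OF k0 d0 G])
        fix s assume "s \<in> G"
        hence "a * b * (1 - \<bar>s\<bar>) \<le> 1 - cos \<theta>" unfolding G_def by auto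
        thus "1 - \<bar>s\<bar> \<le> \<delta>" unfolding \<delta>_def using a0 b0
          by (simp add: pos_le_divide_eq mult.commute)
      qed
      also have "2 * 2 powr \<bar>k - 1\<bar> / \<bar>wnorm k\<bar> * (2 * (\<delta> powr k / k)) = M0 k * \<delta> powr k"
        using k0 by (simp add: M0_def)
      also have "ennreal (M0 k * \<delta> powr k) \<le> ennreal (M0 k * (9 powr k * ratio_factor \<theta> a k))"
        unfolding \<delta>_def by (intro ennreal_leI mult_left_mono delta_le M0) (use k0 a2 ab th in auto)
      finally show ?thesis by (simp add: Kc_def mult.assoc)
    qed
  qed
  moreover have "0 \<le> Kc k * ratio_factor \<theta> a k"
    using M0 th a by (simp add: Kc_def ratio_factor_def)
  ultimately show ?thesis unfolding G_def[symmetric]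
    by (simp add: measure_def enn2real_leI)
qed

lemma inner_vec_real: "inner (u :: real ^ 'n::finite) v = (\<Sum>i\<in>UNIV. u $ i * v $ i)"
  by (simp add: inner_vec_def)

lemma norm_absvec: "norm (absvec (u :: real ^ 'n::finite)) = norm u"
  unfolding norm_eq_sqrt_inner inner_vec_real absvec_def by (simp add: abs_mult_self_eq)

lemma inner_absvec: "inner (absvec (u :: real ^ 'n::finite)) (absvec v) = (\<Sum>i\<in>UNIV. \<bar>u $ i\<bar> * \<bar>v $ i\<bar>)"
  unfolding inner_vec_real absvec_def by simp

lemma comp_meas: "(\<lambda>t. t i) \<in> borel_measurable (PiM UNIV (\<lambda>i. wmeas (\<kappa> i)))"
  by (rule measurable_compose[OF measurable_component_singleton[of i UNIV] meas_wmeas[of "\<lambda>s. s"]]) simp_all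

lemma vec_meas: "(\<lambda>t. (\<chi> i. (y :: real ^ 'n::finite) $ i * t i)) \<in> borel_measurable (PiM UNIV (\<lambda>i. wmeas (\<kappa> i)))"
proof (rule borel_measurable_euclidean_space[THEN iffD2], rule ballI)
  fix b :: "real ^ 'n" assume "b \<in> Basis"
  then obtain i where b: "b = axis i 1" by (auto simp: Basis_vec_def)
  have "(\<lambda>t. y $ i * t i) \<in> borel_measurable (PiM UNIV (\<lambda>i. wmeas (\<kappa> i)))"
    by (intro borel_measurable_times borel_measurable_const comp_meas)
  thus "(\<lambda>t. (\<chi> i. y $ i * t i) \<bullet> b) \<in> borel_measurable (PiM UNIV (\<lambda>i. wmeas (\<kappa> i)))"
    by (simp add: b inner_axis)
qed

lemma Bset_borel: "Bset x \<theta> \<in> sets borel"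
proof -
  have "closed (Bset x \<theta>)" unfolding Bset_def
    by (intro closed_Collect_conj closed_Collect_le continuous_intros)
  thus ?thesis by (rule borel_closed)
qed

lemma AE_box:
  assumes "\<forall>i. \<kappa> i \<ge> 0"
  shows "AE t in PiM (UNIV :: 'n::finite set) (\<lambda>i. wmeas (\<kappa> i)). \<forall>i. \<bar>t i\<bar> \<le> 1"
proof -
  interpret product_sigma_finite "\<lambda>i. wmeas (\<kappa> i)"
    using finite_wmeas assms by (simp add: product_sigma_finite_def finite_measure_def)
  have "AE t in PiM (UNIV :: 'n set) (\<lambda>i. wmeas (\<kappa> i)). \<forall>i\<in>UNIV. \<bar>t i\<bar> \<le> 1"
  proof (rule AE_finite_allI[where S=UNIV])
    show "finite (UNIV :: 'n set)" by simp
  next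
    fix i :: 'n
    have S1: "{s::real. 1 < \<bar>s\<bar>} \<in> sets borel" by measurable
    define N where "N = PiE UNIV (\<lambda>j. if j = i then {s::real. 1 < \<bar>s\<bar>} else UNIV)"
    have Ns: "N \<in> sets (PiM UNIV (\<lambda>i. wmeas (\<kappa> i)))"
      unfolding N_def by (rule sets_PiM_I_finite) (simp_all add: S1 sets_wmeas)
    have "emeasure (PiM UNIV (\<lambda>i. wmeas (\<kappa> i))) N = (\<Prod>j\<in>UNIV. emeasure (wmeas (\<kappa> j)) (if j = i then {s::real. 1 < \<bar>s\<bar>} else UNIV))"
      unfolding N_def by (rule emeasure_PiM) (simp_all add: S1 sets_wmeas)
    also have "\<dots> = 0"
      using null_outside[of "\<kappa> i"] assms by (intro prod_zero) (auto intro!: bexI[of _ i])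
    finally have "N \<in> null_sets (PiM UNIV (\<lambda>i. wmeas (\<kappa> i)))" using Ns by auto
    thus "AE t in PiM UNIV (\<lambda>i. wmeas (\<kappa> i)). \<bar>t i\<bar> \<le> 1"
      by (rule AE_I') (auto simp: N_def space_PiM PiE_def extensional_def)
  qed
  thus ?thesis by simp
qed

lemma key_ineq:
  fixes x y :: "real ^ 'n::finite" and t :: "'n \<Rightarrow> real"
  assumes t: "\<forall>i. \<bar>t i\<bar> \<le> 1" and nx: "norm x = 1" and ny: "norm y = 1"
    and B: "(\<chi> i. y $ i * t i) \<in> Bset x \<theta>"
  shows "cos \<theta> \<le> inner (absvec x) (absvec y)"
    and "\<bar>x $ j\<bar> * \<bar>y $ j\<bar> * (1 - \<bar>t j\<bar>) \<le> 1 - cos \<theta>"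
proof -
  have c1: "cos \<theta> \<le> (\<Sum>i\<in>UNIV. x $ i * (y $ i * t i))"
    using B by (simp add: Bset_def inner_vec_real)
  have each: "x $ i * (y $ i * t i) \<le> \<bar>x $ i\<bar> * \<bar>y $ i\<bar> - (if i = j then \<bar>x $ j\<bar> * \<bar>y $ j\<bar> * (1 - \<bar>t j\<bar>) else 0)" for i
  proof -
    have "x $ i * (y $ i * t i) \<le> \<bar>x $ i\<bar> * \<bar>y $ i\<bar> * \<bar>t i\<bar>"
      by (metis abs_ge_self abs_mult mult.assoc)
    moreover have "\<bar>x $ i\<bar> * \<bar>y $ i\<bar> * \<bar>t i\<bar> \<le> \<bar>x $ i\<bar> * \<bar>y $ i\<bar>"
      using t by (simp add: mult_left_le)
    ultimately show ?thesis by (auto simp: algebra_simps)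
  qed
  have "(\<Sum>i\<in>UNIV. x $ i * (y $ i * t i)) \<le> (\<Sum>i\<in>UNIV. \<bar>x $ i\<bar> * \<bar>y $ i\<bar> - (if i = j then \<bar>x $ j\<bar> * \<bar>y $ j\<bar> * (1 - \<bar>t j\<bar>) else 0))"
    by (rule sum_mono) (rule each)
  also have "\<dots> = inner (absvec x) (absvec y) - \<bar>x $ j\<bar> * \<bar>y $ j\<bar> * (1 - \<bar>t j\<bar>)"
    by (simp add: sum_subtractf inner_absvec)
  finally have c2: "cos \<theta> \<le> inner (absvec x) (absvec y) - \<bar>x $ j\<bar> * \<bar>y $ j\<bar> * (1 - \<bar>t j\<bar>)"
    using c1 by linarith
  have nn: "0 \<le> \<bar>x $ j\<bar> * \<bar>y $ j\<bar> * (1 - \<bar>t j\<bar>)" using t by simp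
  have le1: "inner (absvec x) (absvec y) \<le> 1"
    using norm_cauchy_schwarz[of "absvec x" "absvec y"] by (simp add: norm_absvec nx ny)
  show "cos \<theta> \<le> inner (absvec x) (absvec y)" using c2 nn by linarith
  show "\<bar>x $ j\<bar> * \<bar>y $ j\<bar> * (1 - \<bar>t j\<bar>) \<le> 1 - cos \<theta>" using c2 le1 by linarith
qed

lemma cap_diff:
  fixes x y :: "real ^ 'n::finite"
  assumes nx: "norm x = 1" and ny: "norm y = 1" and c: "cos \<theta> \<le> inner (absvec x) (absvec y)"
    and th: "0 \<le> \<theta>"
  shows "\<bar>x $ j\<bar> - \<bar>y $ j\<bar> \<le> \<theta>"
proof -
  define d where "d = absvec x - absvec y"
  have "(norm d)\<^sup>2 = inner d d" by (rule power2_norm_eq_inner)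
  also have "\<dots> = inner (absvec x) (absvec x) + inner (absvec y) (absvec y) - 2 * inner (absvec x) (absvec y)"
    unfolding d_def inner_diff_left inner_diff_right inner_commute[of "absvec y" "absvec x"] by simp
  also have "inner (absvec x) (absvec x) = 1"
    using power2_norm_eq_inner[of "absvec x"] by (simp add: norm_absvec nx)
  also have "inner (absvec y) (absvec y) = 1"
    using power2_norm_eq_inner[of "absvec y"] by (simp add: norm_absvec ny)
  also have "1 + 1 - 2 * inner (absvec x) (absvec y) \<le> 2 * (1 - cos \<theta>)" using c by simp
  also have "\<dots> \<le> \<theta>\<^sup>2" using cos_bound[of \<theta>] by simp
  finally have "(norm d)\<^sup>2 \<le> \<theta>\<^sup>2" .
  hence "norm d \<le> \<theta>" using th by (rule power2_le_imp_le)
  moreover have "\<bar>x $ j\<bar> - \<bar>y $ j\<bar> \<le> norm d"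
    using component_le_norm_cart[of d j] by (simp add: d_def absvec_def)
  ultimately show ?thesis by simp
qed

theorem lemma3p3:
  fixes \<kappa> :: "real ^ 'n::finite"
  assumes "\<forall>i. \<kappa> $ i \<ge> 0"
  shows "\<exists>c. \<forall>\<theta> (x :: real ^ 'n) y. 0 \<le> \<theta> \<and> \<theta> \<le> pi \<and> norm x = 1 \<and> norm y = 1 \<longrightarrow>
     \<bar>V_kappa \<kappa> (indicator (Bset x \<theta>)) y\<bar>
       \<le> c * (\<Prod>j\<in>UNIV. ratio_factor \<theta> \<bar>x $ j\<bar> (\<kappa> $ j)) * indicator (cap (absvec x) \<theta>) (absvec y)"
proof -
  define c where "c = (\<Prod>j\<in>UNIV. Kc (\<kappa> $ j))"
  define M where "M = (\<lambda>i. wmeas (\<kappa> $ i))"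
  interpret product_sigma_finite M
    using finite_wmeas assms by (simp add: M_def product_sigma_finite_def finite_measure_def)
  have c0: "0 \<le> c" unfolding c_def
    by (intro prod_nonneg) (simp add: Kc_def M0_nonneg assms)
  have AE1: "AE t in PiM UNIV M. \<forall>i. \<bar>t i\<bar> \<le> 1"
    unfolding M_def using AE_box[of "\<lambda>i. \<kappa> $ i"] assms by simp
  show ?thesis
  proof (intro exI[of _ c] allI impI)
    fix \<theta> :: real and x y :: "real ^ 'n"
    assume H: "0 \<le> \<theta> \<and> \<theta> \<le> pi \<and> norm x = 1 \<and> norm y = 1"
    hence th: "0 \<le> \<theta>" and nx: "norm x = 1" and ny: "norm y = 1" by auto
    define F where "F = (\<lambda>t. indicator (Bset x \<theta>) (\<chi> i. y $ i * t i) :: real)"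
    have Fm: "F \<in> borel_measurable (PiM UNIV M)" unfolding F_def M_def
      by (rule measurable_compose[OF vec_meas borel_measurable_indicator[OF Bset_borel]])
    have V: "V_kappa \<kappa> (indicator (Bset x \<theta>)) y = integral\<^sup>L (PiM UNIV M) F"
      by (simp add: V_kappa_def F_def M_def)
    have Vnn: "0 \<le> integral\<^sup>L (PiM UNIV M) F" by (rule Bochner_Integration.integral_nonneg) (simp add: F_def)
    define r where "r = (\<Prod>j\<in>UNIV. ratio_factor \<theta> \<bar>x $ j\<bar> (\<kappa> $ j))"
    show "\<bar>V_kappa \<kappa> (indicator (Bset x \<theta>)) y\<bar> \<le> c * r * indicator (cap (absvec x) \<theta>) (absvec y)"
    proof (cases "absvec y \<in> cap (absvec x) \<theta>")
      case False
      hence lt: "inner (absvec x) (absvec y) < cos \<theta>"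
        using ny by (auto simp: cap_def norm_absvec)
      have "AE t in PiM UNIV M. F t = 0"
        using AE1
      proof eventually_elim
        case (elim t)
        show "F t = 0"
        proof (rule ccontr)
          assume "F t \<noteq> 0"
          hence "(\<chi> i. y $ i * t i) \<in> Bset x \<theta>" by (simp add: F_def indicator_def split: if_splits)
          from key_ineq(1)[OF elim nx ny this] lt show False by simp
        qed
      qed
      hence "integral\<^sup>L (PiM UNIV M) F = 0" by (rule integral_eq_zero_AE)
      thus ?thesis using False V by simp
    next
      case True
      hence cin: "cos \<theta> \<le> inner (absvec x) (absvec y)" by (simp add: cap_def)
      define G where "G = (\<lambda>j. {s::real. \<bar>s\<bar> \<le> 1 \<and> \<bar>x $ j\<bar> * \<bar>y $ j\<bar> * (1 - \<bar>s\<bar>) \<le> 1 - cos \<theta>})"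
      have Gs: "G j \<in> sets (M j)" for j
        unfolding M_def by (rule sets_wmeas) (unfold G_def, measurable)
      have "(\<integral>\<^sup>+ t. ennreal (F t) \<partial>PiM UNIV M) \<le> (\<integral>\<^sup>+ t. (\<Prod>j\<in>UNIV. indicator (G j) (t j)) \<partial>PiM UNIV M)"
        using AE1
      proof (rule nn_integral_mono_AE[OF eventually_mono])
        fix t :: "'n \<Rightarrow> real" assume tb: "\<forall>i. \<bar>t i\<bar> \<le> 1"
        show "ennreal (F t) \<le> (\<Prod>j\<in>UNIV. indicator (G j) (t j))"
        proof (cases "(\<chi> i. y $ i * t i) \<in> Bset x \<theta>")
          case True
          have "t j \<in> G j" for j
            using key_ineq(2)[OF tb nx ny True, of j] tb by (simp add: G_def)
          thus ?thesis by (simp add: F_def True)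
        next
          case False
          thus ?thesis by (simp add: F_def)
        qed
      qed
      also have "\<dots> = (\<Prod>j\<in>UNIV. \<integral>\<^sup>+ s. indicator (G j) s \<partial>M j)"
        by (rule product_nn_integral_prod) (auto intro: borel_measurable_indicator Gs)
      also have "\<dots> = (\<Prod>j\<in>UNIV. ennreal (measure (M j) (G j)))"
      proof (rule prod.cong[OF refl])
        fix j
        interpret finite_measure "M j" unfolding M_def using finite_wmeas assms by simp
        show "(\<integral>\<^sup>+ s. indicator (G j) s \<partial>M j) = ennreal (measure (M j) (G j))"
          using Gs[of j] by (simp add: emeasure_eq_measure)
      qed
      also have "\<dots> = ennreal (\<Prod>j\<in>UNIV. measure (M j) (G j))"
        by (simp add: prod_ennreal)
      finally have le: "(\<integral>\<^sup>+ t. ennreal (F t) \<partial>PiM UNIV M) \<le> ennreal (\<Prod>j\<in>UNIV. measure (M j) (G j))" .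
      have "integral\<^sup>L (PiM UNIV M) F = enn2real (\<integral>\<^sup>+ t. ennreal (F t) \<partial>PiM UNIV M)"
        by (rule integral_eq_nn_integral[OF Fm]) (simp add: F_def)
      also have "\<dots> \<le> (\<Prod>j\<in>UNIV. measure (M j) (G j))"
        using le by (intro enn2real_leI) (auto intro: prod_nonneg)
      also have "\<dots> \<le> (\<Prod>j\<in>UNIV. Kc (\<kappa> $ j) * ratio_factor \<theta> \<bar>x $ j\<bar> (\<kappa> $ j))"
      proof (rule prod_mono, rule conjI)
        fix j :: 'n
        show "0 \<le> measure (M j) (G j)" by simp
        show "measure (M j) (G j) \<le> Kc (\<kappa> $ j) * ratio_factor \<theta> \<bar>x $ j\<bar> (\<kappa> $ j)"
          unfolding M_def G_def
          by (rule coord_bound) (use assms th cap_diff[OF nx ny cin th, of j] in auto)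
      qed
      also have "\<dots> = c * r" by (simp add: c_def r_def prod.distrib)
      finally show ?thesis using Vnn V True by simp
    qed
  qed
qed

end
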